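(* For every positive integer $N$ there exist a connected simple graph $G$ and a vertex $v\in V(G)$ which is not a cut vertex of $G$ such that $|\chi_{dom}(G)-\chi_{dom}(G-v)|\geq N$. (For instance, $G$ a wheel $W_n$ with $n$ large and $v$ its center, so that $G-v$ is the cycle $C_n$.)
   Context: All graphs are finite and simple. A dominated coloring of a graph $H$ is a proper vertex coloring of $H$ such that for every color class $C$ there is a vertex $x\in V(H)$ adjacent to every vertex of $C$. The dominated chromatic number $\chi_{dom}(H)$ is the minimum number of colors in a dominated coloring of $H$. $G-v$ denotes the graph obtained from $G$ by deleting $v$ and all edges incident with $v$. The wheel $W_n$ is the graph obtained from the cycle $C_n$ by adding one new vertex (the center) adjacent to all vertices of the cycle. *)

theory Defs
  imports Main
begin

definition simple_graph :: "'a set \<Rightarrow> 'a set set \<Rightarrow> bool" where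
  "simple_graph V E \<longleftrightarrow> finite V \<and> (\<forall>e\<in>E. e \<subseteq> V \<and> card e = 2)"

definition adj :: "'a set set \<Rightarrow> 'a \<Rightarrow> 'a \<Rightarrow> bool" where
  "adj E x y \<longleftrightarrow> {x, y} \<in> E"

fun is_walk :: "'a set \<Rightarrow> 'a set set \<Rightarrow> 'a list \<Rightarrow> bool" where
  "is_walk V E [] \<longleftrightarrow> False"
| "is_walk V E [x] \<longleftrightarrow> x \<in> V"
| "is_walk V E (x # y # xs) \<longleftrightarrow> x \<in> V \<and> adj E x y \<and> is_walk V E (y # xs)"

definition connected_graph :: "'a set \<Rightarrow> 'a set set \<Rightarrow> bool" where
  "connected_graph V E \<longleftrightarrow> V \<noteq> {} \<and>
     (\<forall>x\<in>V. \<forall>y\<in>V. \<exists>p. is_walk V E p \<and> hd p = x \<and> last p = y)"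

definition del_vertex_V :: "'a set \<Rightarrow> 'a \<Rightarrow> 'a set" where
  "del_vertex_V V v = V - {v}"

definition del_vertex_E :: "'a set set \<Rightarrow> 'a \<Rightarrow> 'a set set" where
  "del_vertex_E E v = {e \<in> E. v \<notin> e}"

definition cut_vertex :: "'a set \<Rightarrow> 'a set set \<Rightarrow> 'a \<Rightarrow> bool" where
  "cut_vertex V E v \<longleftrightarrow> v \<in> V \<and> \<not> connected_graph (del_vertex_V V v) (del_vertex_E E v)"

definition dominated_coloring :: "'a set \<Rightarrow> 'a set set \<Rightarrow> ('a \<Rightarrow> nat) \<Rightarrow> nat \<Rightarrow> bool" where
  "dominated_coloring V E c k \<longleftrightarrow>
     (\<forall>x\<in>V. c x < k) \<and>
     (\<forall>x\<in>V. \<forall>y\<in>V. adj E x y \<longrightarrow> c x \<noteq> c y) \<and>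
     (\<forall>i<k. (\<exists>z\<in>V. c z = i) \<longrightarrow> (\<exists>x\<in>V. \<forall>z\<in>V. c z = i \<longrightarrow> adj E x z))"

definition is_chi_dom :: "'a set \<Rightarrow> 'a set set \<Rightarrow> nat \<Rightarrow> bool" where
  "is_chi_dom V E k \<longleftrightarrow> (\<exists>c. dominated_coloring V E c k) \<and>
     (\<forall>j c. dominated_coloring V E c j \<longrightarrow> k \<le> j)"

end

theory Submission
  imports Defs
begin

definition PE :: "nat \<Rightarrow> nat set set" where
  "PE n = {{i, Suc i}|i. 1 \<le> i \<and> i < n}"
definition FE :: "nat \<Rightarrow> nat set set" where
  "FE n = PE n \<union> {{0, i}|i. 1 \<le> i \<and> i \<le> n}"

lemma walk_mono: "is_walk V E p \<Longrightarrow> V \<subseteq> V' \<Longrightarrow> E \<subseteq> E' \<Longrightarrow> is_walk V' E' p"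
  by (induction V E p rule: is_walk.induct) (auto simp: adj_def)

lemma walk_snoc: "is_walk V E p \<Longrightarrow> adj E (last p) x \<Longrightarrow> x \<in> V \<Longrightarrow> is_walk V E (p @ [x])"
  by (induction V E p rule: is_walk.induct) auto

lemma walk_hd: "is_walk V E p \<Longrightarrow> hd p \<in> V"
  by (induction V E p rule: is_walk.induct) auto

lemma walk_rev: "is_walk V E p \<Longrightarrow> is_walk V E (rev p)"
proof (induction V E p rule: is_walk.induct)
  case (3 V E x y xs)
  then have "is_walk V E (rev (y # xs))" by simp
  moreover have "adj E (last (rev (y#xs))) x" using 3 by (auto simp: adj_def insert_commute)
  ultimately show ?case using 3 walk_snoc by fastforce
qed auto

lemma path_walk: "\<forall>i. i + d = j \<longrightarrow> 1 \<le> i \<longrightarrow> j \<le> n \<longrightarrow> is_walk {1..n} (PE n) [i..<Suc j]"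
proof (induction d)
  case 0 then show ?case by auto
next
  case (Suc d)
  show ?case
  proof (intro allI impI)
    fix i assume a: "i + Suc d = j" "1 \<le> i" "j \<le> n"
    have w: "is_walk {1..n} (PE n) [Suc i..<Suc j]" using Suc a by auto
    have e: "[i..<Suc j] = i # [Suc i..<Suc j]" using a by (simp add: upt_rec)
    have e2: "[Suc i..<Suc j] = Suc i # [Suc (Suc i)..<Suc j]" using a by (simp add: upt_rec)
    have "adj (PE n) i (Suc i)" using a by (auto simp: adj_def PE_def)
    then show "is_walk {1..n} (PE n) [i..<Suc j]" using w a unfolding e
      by (subst e2, subst (asm) e2) auto
  qed
qed

lemma path_conn: "1 \<le> n \<Longrightarrow> connected_graph {1..n} (PE n)"
  unfolding connected_graph_def
proof (intro conjI ballI)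
  fix x y assume xy: "x \<in> {1..n::nat}" "y \<in> {1..n}"
  show "\<exists>p. is_walk {1..n} (PE n) p \<and> hd p = x \<and> last p = y"
  proof (cases "x \<le> y")
    case True
    have "is_walk {1..n} (PE n) [x..<Suc y]"
      using path_walk[of "y - x" y n, rule_format, of x] xy True by simp
    moreover have "hd [x..<Suc y] = x" "last [x..<Suc y] = y" using True by (simp_all del: upt_Suc add: hd_upt last_upt)
    ultimately show ?thesis by blast
  next
    case False
    have w: "is_walk {1..n} (PE n) [y..<Suc x]"
      using path_walk[of "x - y" x n, rule_format, of y] xy False by simp
    show ?thesis using False
      using walk_rev[OF w] by (intro exI[of _ "rev [y..<Suc x]"]) (simp del: upt_Suc add: hd_rev last_rev hd_upt last_upt)
  qed
qed auto

lemma fan_conn: "1 \<le> n \<Longrightarrow> connected_graph {0..n} (FE n)"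
  unfolding connected_graph_def
proof (intro conjI ballI)
  assume n: "1 \<le> n"
  fix x y assume xy: "x \<in> {0..n::nat}" "y \<in> {0..n}"
  show "\<exists>p. is_walk {0..n} (FE n) p \<and> hd p = x \<and> last p = y"
  proof (cases "x = 0")
    case True
    show ?thesis
    proof (cases "y = 0")
      case True then show ?thesis using \<open>x=0\<close> by (intro exI[of _ "[0]"]) auto
    next
      case False then show ?thesis using \<open>x=0\<close> xy
        by (intro exI[of _ "[0,y]"]) (auto simp: adj_def FE_def)
    qed
  next
    case False
    show ?thesis
    proof (cases "y = 0")
      case True then show ?thesis using \<open>x\<noteq>0\<close> xy
        by (intro exI[of _ "[x,0]"]) (auto simp: adj_def FE_def insert_commute)
    next
      case False
      then obtain p where "is_walk {1..n} (PE n) p" "hd p = x" "last p = y"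
        using path_conn[OF n] xy \<open>x\<noteq>0\<close> unfolding connected_graph_def by force
      moreover have "{1..n} \<subseteq> {0..n}" "PE n \<subseteq> FE n" by (auto simp: FE_def)
      ultimately show ?thesis using walk_mono by blast
    qed
  qed
qed auto

lemma card2: "a \<noteq> b \<Longrightarrow> card {a, b} = 2" by simp

lemma fan_simple: "simple_graph {0..n} (FE n)"
  unfolding simple_graph_def FE_def PE_def by auto

lemma del_V: "del_vertex_V {0..n} 0 = {1..(n::nat)}"
  unfolding del_vertex_V_def by auto

lemma del_E: "del_vertex_E (FE n) 0 = PE n"
  unfolding del_vertex_E_def FE_def PE_def by auto

lemma fan_col: assumes n: "1 \<le> n" shows "dominated_coloring {0..n} (FE n) (\<lambda>i. if i = 0 then 0 else if even i then 1 else 2) 3"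
  unfolding dominated_coloring_def
proof (intro conjI)
  show "\<forall>x\<in>{0..n}. (if x = 0 then 0 else if even x then 1 else 2) < (3::nat)" by auto
  show "\<forall>x\<in>{0..n}. \<forall>y\<in>{0..n}. adj (FE n) x y \<longrightarrow>
     (if x = 0 then 0 else if even x then 1 else 2) \<noteq> (if y = 0 then 0 else if even y then 1 else (2::nat))"
    unfolding adj_def FE_def PE_def by (auto simp: doubleton_eq_iff)
  show "\<forall>i<(3::nat). (\<exists>z\<in>{0..n}. (if z = 0 then 0 else if even z then 1 else 2) = i) \<longrightarrow>
     (\<exists>x\<in>{0..n}. \<forall>z\<in>{0..n}. (if z = 0 then 0 else if even z then 1 else 2) = i \<longrightarrow> adj (FE n) x z)"
  proof (intro allI impI)
    fix i :: nat assume "i < 3" "\<exists>z\<in>{0..n}. (if z = 0 then 0 else if even z then 1 else 2) = i"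
    show "\<exists>x\<in>{0..n}. \<forall>z\<in>{0..n}. (if z = 0 then 0 else if even z then 1 else 2) = i \<longrightarrow> adj (FE n) x z"
    proof (cases "i = 0")
      case True
      then show ?thesis using n
        by (intro bexI[of _ 1]) (auto simp: adj_def FE_def insert_commute split: if_splits)
    next
      case False
      then show ?thesis
        by (intro bexI[of _ 0]) (auto simp: adj_def FE_def split: if_splits)
    qed
  qed
qed

lemma path_lower: assumes "dominated_coloring {1..n} (PE n) c j" shows "n \<le> 2 * j"
proof -
  let ?S = "\<lambda>i. {z\<in>{1..n}. c z = i}"
  have sub: "{1..n} \<subseteq> (\<Union>i\<in>{..<j}. ?S i)" using assms unfolding dominated_coloring_def by auto
  have cs: "card (?S i) \<le> 2" if "i < j" for i
  proof (cases "\<exists>z\<in>{1..n}. c z = i")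
    case True
    then obtain x where x: "\<forall>z\<in>{1..n}. c z = i \<longrightarrow> adj (PE n) x z"
      using assms that unfolding dominated_coloring_def by blast
    have "?S i \<subseteq> {Suc x, x - 1}"
    proof
      fix z assume "z \<in> ?S i"
      then have "{x, z} \<in> PE n" using x by (auto simp: adj_def)
      then show "z \<in> {Suc x, x - 1}" unfolding PE_def by (auto simp: doubleton_eq_iff)
    qed
    then have "card (?S i) \<le> card {Suc x, x - 1}" by (intro card_mono) auto
    also have "\<dots> \<le> 2" by (simp add: card_insert_if)
    finally show ?thesis .
  next
    case False
    then have "?S i = {}" by auto
    then show ?thesis by (metis card.empty le0)
  qed
  have "n = card {1..n}" by simp
  also have "\<dots> \<le> card (\<Union>i\<in>{..<j}. ?S i)" by (intro card_mono[OF _ sub]) auto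
  also have "\<dots> \<le> (\<Sum>i\<in>{..<j}. card (?S i))" by (rule card_UN_le) auto
  also have "\<dots> \<le> (\<Sum>i\<in>{..<j}. 2)" by (intro sum_mono) (use cs in auto)
  also have "\<dots> = 2 * j" by simp
  finally show ?thesis .
qed

lemma least_chi: assumes "dominated_coloring V E c k"
  shows "is_chi_dom V E (LEAST j. \<exists>c. dominated_coloring V E c j)"
    and "(LEAST j. \<exists>c. dominated_coloring V E c j) \<le> k"
proof -
  show "is_chi_dom V E (LEAST j. \<exists>c. dominated_coloring V E c j)"
    unfolding is_chi_dom_def using assms
    by (auto intro: LeastI Least_le)
  show "(LEAST j. \<exists>c. dominated_coloring V E c j) \<le> k" using assms by (auto intro: Least_le)
qed

theorem theorem2p3:
  fixes N :: nat
  assumes "N > 0"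
  shows "\<exists>(V :: nat set) E v k1 k2.
           simple_graph V E \<and> connected_graph V E \<and> v \<in> V \<and> \<not> cut_vertex V E v \<and>
           is_chi_dom V E k1 \<and>
           is_chi_dom (del_vertex_V V v) (del_vertex_E E v) k2 \<and>
           \<bar>int k1 - int k2\<bar> \<ge> int N"
proof -
  define n where "n = 2 * N + 8"
  have n: "1 \<le> n" by (simp add: n_def)
  define k1 where "k1 = (LEAST j. \<exists>c. dominated_coloring {0..n} (FE n) c j)"
  have c1: "is_chi_dom {0..n} (FE n) k1" "k1 \<le> 3"
    using least_chi[OF fan_col[OF n]] unfolding k1_def by auto
  define c where "c = (\<lambda>i::nat. i - 1)"
  have "dominated_coloring {1..n} (PE n) c n"
    unfolding dominated_coloring_def
  proof (intro conjI allI impI ballI)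
    show "\<And>x y. x \<in> {1..n} \<Longrightarrow> y \<in> {1..n} \<Longrightarrow> adj (PE n) x y \<Longrightarrow> c x \<noteq> c y"
      unfolding adj_def PE_def c_def by (auto simp: doubleton_eq_iff)
    fix i assume "i < n" "\<exists>z\<in>{1..n}. c z = i"
    show "\<exists>x\<in>{1..n}. \<forall>z\<in>{1..n}. c z = i \<longrightarrow> adj (PE n) x z"
    proof (cases "i = 0")
      case True
      then show ?thesis unfolding n_def c_def adj_def PE_def
        by (intro bexI[of _ 2]) (auto intro!: exI[of _ 1])
    next
      case False
      then show ?thesis using \<open>i < n\<close> unfolding c_def adj_def PE_def
        by (intro bexI[of _ i]) (auto intro!: exI[of _ i])
    qed
  qed (auto simp: c_def)
  define k2 where "k2 = (LEAST j. \<exists>c. dominated_coloring {1..n} (PE n) c j)"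
  have c2: "is_chi_dom {1..n} (PE n) k2"
    using least_chi[OF \<open>dominated_coloring {1..n} (PE n) c n\<close>] unfolding k2_def by auto
  then obtain c' where "dominated_coloring {1..n} (PE n) c' k2" unfolding is_chi_dom_def by auto
  then have "n \<le> 2 * k2" by (rule path_lower)
  then have "k2 \<ge> N + 4" unfolding n_def by simp
  then have "\<bar>int k1 - int k2\<bar> \<ge> int N" using c1 by simp
  moreover have "\<not> cut_vertex {0..n} (FE n) 0"
    unfolding cut_vertex_def del_V del_E using path_conn[OF n] by simp
  ultimately show ?thesis using fan_simple fan_conn[OF n] c1 c2 del_V del_E
    by (intro exI[of _ "{0..n}"] exI[of _ "FE n"] exI[of _ 0] exI[of _ k1] exI[of _ k2]) simp
qed

end
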